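(* Let $n\ge1$, $m=2^n$, and let $\mathcal{B}$ be a nontrivial boolean algebra. The number of ordered pairs $(A_1,A_2)$ of subsets of $\{0,1\}^n$ such that the algebraic sets $V_{\mathcal{B}}(S_{A_1})$ and $V_{\mathcal{B}}(S_{A_2})$ are isomorphic equals $\binom{2m}{m}$. Hence the proportion of such pairs among all $4^m$ ordered pairs is $\binom{2m}{m}/4^m$, which is asymptotically equal to $\frac{1}{\sqrt{\pi m}}$ as $n\to\infty$.
   Context: Boolean algebras are in the language $\{\vee,\cdot,\bar{\ },0,1\}$. Orthogonal variables: $Z=\{z_\alpha:\alpha\in\{0,1\}^n\}$, $|Z|=m=2^n$. For $A\subseteq\{0,1\}^n$ the orthogonal system is $$S_A=\{z_\alpha=0\mid\alpha\in A\}\cup\{z_\alpha z_\beta=0\mid \alpha\ne\beta\}\cup\{\textstyle\bigvee_{\alpha}z_\alpha=1\},$$ and $V_{\mathcal{B}}(S)$ is its solution set over $\mathcal{B}$. For an algebraic set $Y$, $t\sim_Y s$ on terms iff $t(P)=s(P)$ for all $P\in Y$; the quotient is the coordinate algebra $\Gamma_{\mathcal{B}}(Y)$. Two algebraic sets are isomorphic if their coordinate algebras are isomorphic as boolean algebras. *)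

theory Defs
  imports Complex_Main "HOL-Library.Landau_Symbols" "HOL-Library.FuncSet"
begin

datatype 'v bterm = Var 'v | Join "'v bterm" "'v bterm" | Meet "'v bterm" "'v bterm"
  | Compl "'v bterm" | Zero | One

primrec eval :: "('v \<Rightarrow> 'b::boolean_algebra) \<Rightarrow> 'v bterm \<Rightarrow> 'b" where
  "eval P (Var v) = P v"
| "eval P (Join t s) = sup (eval P t) (eval P s)"
| "eval P (Meet t s) = inf (eval P t) (eval P s)"
| "eval P (Compl t) = - eval P t"
| "eval P Zero = bot"
| "eval P One = top"

primrec vars :: "'v bterm \<Rightarrow> 'v set" where
  "vars (Var v) = {v}"
| "vars (Join t s) = vars t \<union> vars s"
| "vars (Meet t s) = vars t \<union> vars s"
| "vars (Compl t) = vars t"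
| "vars Zero = {}"
| "vars One = {}"

definition cube :: "nat \<Rightarrow> bool list set" where
  "cube n = {xs. length xs = n}"

definition cube_list :: "nat \<Rightarrow> bool list list" where
  "cube_list n = List.n_lists n [False, True]"

definition terms :: "nat \<Rightarrow> bool list bterm set" where
  "terms n = {t. vars t \<subseteq> cube n}"

fun join_list :: "'v bterm list \<Rightarrow> 'v bterm" where
  "join_list [] = Zero"
| "join_list (t # ts) = Join t (join_list ts)"

definition orth_system :: "nat \<Rightarrow> bool list set \<Rightarrow> (bool list bterm \<times> bool list bterm) set" where
  "orth_system n A =
     {(Var a, Zero) | a. a \<in> A}
   \<union> {(Meet (Var a) (Var b), Zero) | a b. a \<in> cube n \<and> b \<in> cube n \<and> a \<noteq> b}
   \<union> {(join_list (map Var (cube_list n)), One)}"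

(* solution set V_B(S) in B^Z: points are functions Z \<rightarrow> B (extensional outside Z) *)
definition alg_set :: "nat \<Rightarrow> (bool list bterm \<times> bool list bterm) set
    \<Rightarrow> (bool list \<Rightarrow> 'b::boolean_algebra) set" where
  "alg_set n S = {P. P \<in> cube n \<rightarrow>\<^sub>E UNIV \<and> (\<forall>(t, s) \<in> S. eval P t = eval P s)}"

definition coord_rel :: "nat \<Rightarrow> (bool list \<Rightarrow> 'b::boolean_algebra) set
    \<Rightarrow> (bool list bterm \<times> bool list bterm) set" where
  "coord_rel n Y = {(t, s). t \<in> terms n \<and> s \<in> terms n \<and> (\<forall>P \<in> Y. eval P t = eval P s)}"

record 'a balg =
  bcarrier :: "'a set"
  bjoin :: "'a \<Rightarrow> 'a \<Rightarrow> 'a"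
  bmeet :: "'a \<Rightarrow> 'a \<Rightarrow> 'a"
  bcompl :: "'a \<Rightarrow> 'a"
  bzero :: 'a
  bone :: 'a

definition coord_alg :: "nat \<Rightarrow> (bool list \<Rightarrow> 'b::boolean_algebra) set
    \<Rightarrow> bool list bterm set balg" where
  "coord_alg n Y =
     (let R = coord_rel n Y; rep = (\<lambda>X. SOME t. t \<in> X) in
      \<lparr> bcarrier = terms n // R,
        bjoin = (\<lambda>X X'. R `` {Join (rep X) (rep X')}),
        bmeet = (\<lambda>X X'. R `` {Meet (rep X) (rep X')}),
        bcompl = (\<lambda>X. R `` {Compl (rep X)}),
        bzero = R `` {Zero},
        bone = R `` {One} \<rparr>)"

definition balg_iso :: "'a balg \<Rightarrow> 'c balg \<Rightarrow> bool" where
  "balg_iso A B \<longleftrightarrow> (\<exists>h. bij_betw h (bcarrier A) (bcarrier B)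
     \<and> (\<forall>x \<in> bcarrier A. \<forall>y \<in> bcarrier A.
          h (bjoin A x y) = bjoin B (h x) (h y) \<and> h (bmeet A x y) = bmeet B (h x) (h y))
     \<and> (\<forall>x \<in> bcarrier A. h (bcompl A x) = bcompl B (h x))
     \<and> h (bzero A) = bzero B \<and> h (bone A) = bone B)"

definition alg_sets_iso :: "nat \<Rightarrow> (bool list \<Rightarrow> 'b::boolean_algebra) set
    \<Rightarrow> (bool list \<Rightarrow> 'b) set \<Rightarrow> bool" where
  "alg_sets_iso n Y1 Y2 \<longleftrightarrow> balg_iso (coord_alg n Y1) (coord_alg n Y2)"

definition iso_pairs :: "'b::boolean_algebra itself \<Rightarrow> nat \<Rightarrow> (bool list set \<times> bool list set) set" where
  "iso_pairs TYPE('b) n = {(A1, A2). A1 \<subseteq> cube n \<and> A2 \<subseteq> cube n \<and>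
      alg_sets_iso n (alg_set n (orth_system n A1) :: (bool list \<Rightarrow> 'b) set)
                     (alg_set n (orth_system n A2))}"

end

theory Submission
  imports Defs "HOL-Analysis.Analysis"
begin


lemma eval_cong: "(\<And>v. v \<in> vars t \<Longrightarrow> P v = Q v) \<Longrightarrow> eval P t = eval Q t"
  by (induction t) auto

lemma eval_map: "eval P (map_bterm f t) = eval (P \<circ> f) t"
  by (induction t) auto

lemma vars_map: "vars (map_bterm f t) = f ` vars t"
  by (induction t) auto

lemma map_cong_vars: "(\<And>v. v \<in> vars t \<Longrightarrow> f v = g v) \<Longrightarrow> map_bterm f t = map_bterm g t"
  by (induction t) auto

lemma vars_join_list: "vars (join_list (map Var xs)) = set xs"
  by (induction xs) auto

lemma join_list_inf:
  assumes "\<And>a. a \<in> set xs \<Longrightarrow> inf x (P a) = inf y (P a)"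
  shows "inf x (eval P (join_list (map Var xs))) = inf y (eval P (join_list (map Var xs)))"
  using assms by (induction xs) (auto simp: inf_sup_distrib1)

lemma join_list_top:
  "a \<in> set xs \<Longrightarrow> P a = top \<Longrightarrow> eval P (join_list (map Var xs)) = top"
  by (induction xs) auto

lemma join_list_bot:
  "(\<And>a. a \<in> set xs \<Longrightarrow> P a = bot) \<Longrightarrow> eval P (join_list (map Var xs)) = bot"
  by (induction xs) auto

lemma set_cube_list: "set (cube_list n) = cube n"
  unfolding cube_list_def cube_def by (auto simp: set_n_lists)

lemma card_cube: "card (cube n) = 2 ^ n"
proof -
  have "cube n = {xs. set xs \<subseteq> (UNIV::bool set) \<and> length xs = n}" unfolding cube_def by auto
  then show ?thesis using card_lists_length_eq[of "UNIV::bool set" n] by simp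
qed

lemma finite_cube: "finite (cube n)"
  using card_cube[of n] card.infinite by fastforce

definition delta :: "nat \<Rightarrow> bool list \<Rightarrow> bool list \<Rightarrow> 'b::boolean_algebra" where
  "delta n \<alpha> = (\<lambda>a. if a \<in> cube n then (if a = \<alpha> then top else bot) else undefined)"

lemma delta_in:
  assumes "A \<subseteq> cube n" "\<alpha> \<in> cube n" "\<alpha> \<notin> A"
  shows "(delta n \<alpha> :: bool list \<Rightarrow> 'b::boolean_algebra) \<in> alg_set n (orth_system n A)"
proof -
  have "eval (delta n \<alpha> :: bool list \<Rightarrow> 'b) (join_list (map Var (cube_list n))) = top"
    by (rule join_list_top[of \<alpha>]) (use assms in \<open>auto simp: set_cube_list delta_def\<close>)
  then show ?thesis using assms
    unfolding alg_set_def orth_system_def by (auto simp: delta_def PiE_def extensional_def)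
qed


lemma atom_lemma:
  fixes P :: "bool list \<Rightarrow> 'b::boolean_algebra"
  assumes nt: "(bot::'b) \<noteq> top" and A: "A \<subseteq> cube n" and P: "P \<in> alg_set n (orth_system n A)"
    and al: "\<alpha> \<in> cube n"
  shows "vars t \<subseteq> cube n \<Longrightarrow>
     (eval (delta n \<alpha> :: bool list \<Rightarrow> 'b) t = top \<or> eval (delta n \<alpha> :: bool list \<Rightarrow> 'b) t = bot) \<and>
     inf (P \<alpha>) (eval P t) = (if eval (delta n \<alpha> :: bool list \<Rightarrow> 'b) t = top then P \<alpha> else bot)"
proof (induction t)
  case (Var v)
  have orth: "inf (P a) (P b) = bot" if "a \<in> cube n" "b \<in> cube n" "a \<noteq> b" for a b
  proof -
    have "(Meet (Var a) (Var b), Zero) \<in> orth_system n A" using that unfolding orth_system_def by auto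
    then show ?thesis using P unfolding alg_set_def by auto
  qed
  show ?case using Var nt al orth[of \<alpha> v] by (auto simp: delta_def)
next
  case (Join t1 t2)
  then show ?case using nt by (auto simp: inf_sup_distrib1)
next
  case (Meet t1 t2)
  then have h: "inf (P \<alpha>) (inf x y) = inf (inf (P \<alpha>) x) (inf (P \<alpha>) y)" for x y
    by (simp add: inf_aci)
  from Meet show ?case using nt by (auto simp: h)
next
  case (Compl t)
  have c1: "inf p (- x) = bot" if "inf p x = p" for p x :: 'b
    by (metis that inf_compl_bot_left1 inf_commute)
  have c2: "inf p (- x) = p" if "inf p x = bot" for p x :: 'b
    by (meson inf_absorb1 inf_shunt that)
  from Compl show ?case using nt c1 c2 by auto
qed (use nt in auto)


definition gfun :: "'b::boolean_algebra itself \<Rightarrow> nat \<Rightarrow> bool list set \<Rightarrow> bool list bterm \<Rightarrow> bool list set" where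
  "gfun TYPE('b) n A t = {\<alpha> \<in> cube n - A. eval (delta n \<alpha> :: bool list \<Rightarrow> 'b) t = top}"

lemma coord_rel_char:
  assumes nt: "(bot::'b::boolean_algebra) \<noteq> top" and A: "A \<subseteq> cube n"
  shows "coord_rel n (alg_set n (orth_system n A) :: (bool list \<Rightarrow> 'b) set)
     = {(t,s). t \<in> terms n \<and> s \<in> terms n \<and> gfun TYPE('b) n A t = gfun TYPE('b) n A s}"
  (is "?L = ?R")
proof
  show "?L \<subseteq> ?R"
  proof clarify
    fix t s assume "(t, s) \<in> ?L"
    then have ts: "t \<in> terms n" "s \<in> terms n"
      and e: "\<And>P. P \<in> (alg_set n (orth_system n A) :: (bool list \<Rightarrow> 'b) set) \<Longrightarrow> eval P t = eval P s"
      unfolding coord_rel_def by auto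
    have "gfun TYPE('b) n A t = gfun TYPE('b) n A s"
      unfolding gfun_def using e[OF delta_in[OF A]] by auto
    with ts show "t \<in> terms n \<and> s \<in> terms n \<and> gfun TYPE('b) n A t = gfun TYPE('b) n A s" by auto
  qed
next
  show "?R \<subseteq> ?L"
  proof clarify
    fix t s assume ts: "t \<in> terms n" "s \<in> terms n" and g: "gfun TYPE('b) n A t = gfun TYPE('b) n A s"
    have "eval P t = eval P s" if P: "P \<in> (alg_set n (orth_system n A) :: (bool list \<Rightarrow> 'b) set)" for P
    proof -
      have J: "eval P (join_list (map Var (cube_list n))) = top"
        using P unfolding alg_set_def orth_system_def by auto
      have z: "P a = bot" if "a \<in> A" for a
      proof -
        have "(Var a, Zero) \<in> orth_system n A" using that unfolding orth_system_def by auto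
        then show ?thesis using P unfolding alg_set_def by auto
      qed
      have I: "inf (eval P t) (P a) = inf (eval P s) (P a)" if a: "a \<in> set (cube_list n)" for a
      proof (cases "a \<in> A")
        case True then show ?thesis using z by simp
      next
        case False
        have ac: "a \<in> cube n" using a set_cube_list by auto
        have vt: "vars t \<subseteq> cube n" "vars s \<subseteq> cube n" using ts unfolding terms_def by auto
        note at = atom_lemma[OF nt A P ac vt(1)] and as = atom_lemma[OF nt A P ac vt(2)]
        have "(eval (delta n a :: bool list \<Rightarrow> 'b) t = top) = (eval (delta n a :: bool list \<Rightarrow> 'b) s = top)"
          using g False ac unfolding gfun_def by blast
        then show ?thesis using at as by (simp add: inf_commute)
      qed
      from join_list_inf[of "cube_list n" "eval P t" P "eval P s", OF I] J show ?thesis by simp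
    qed
    then show "(t, s) \<in> ?L" using ts unfolding coord_rel_def by auto
  qed
qed


lemma gfun_image:
  assumes nt: "(bot::'b::boolean_algebra) \<noteq> top" and A: "A \<subseteq> cube n"
  shows "gfun TYPE('b) n A ` terms n = Pow (cube n - A)"
proof
  show "gfun TYPE('b) n A ` terms n \<subseteq> Pow (cube n - A)" unfolding gfun_def by auto
next
  show "Pow (cube n - A) \<subseteq> gfun TYPE('b) n A ` terms n"
  proof
    fix S assume S: "S \<in> Pow (cube n - A)"
    then have "finite S" using finite_cube by (meson PowD finite_Diff finite_subset)
    then obtain xs where xs: "set xs = S" using finite_list by auto
    let ?t = "join_list (map Var xs)"
    have tt: "?t \<in> terms n" using xs S unfolding terms_def by (auto simp: vars_join_list)
    have "eval (delta n \<alpha> :: bool list \<Rightarrow> 'b) ?t = top \<longleftrightarrow> \<alpha> \<in> S" if "\<alpha> \<in> cube n" for \<alpha>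
    proof
      assume "\<alpha> \<in> S" then show "eval (delta n \<alpha> :: bool list \<Rightarrow> 'b) ?t = top"
        using xs that by (intro join_list_top[of \<alpha>]) (auto simp: delta_def)
    next
      assume "eval (delta n \<alpha> :: bool list \<Rightarrow> 'b) ?t = top"
      moreover have "\<alpha> \<notin> S \<Longrightarrow> eval (delta n \<alpha> :: bool list \<Rightarrow> 'b) ?t = bot"
        using xs S by (intro join_list_bot) (auto simp: delta_def)
      ultimately show "\<alpha> \<in> S" using nt by auto
    qed
    then have "gfun TYPE('b) n A ?t = S" using S unfolding gfun_def by auto
    then show "S \<in> gfun TYPE('b) n A ` terms n" using tt by blast
  qed
qed

lemma card_quotient_g:
  "card (T // {(t,s). t \<in> T \<and> s \<in> T \<and> g t = g s}) = card (g ` T)"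
proof -
  let ?R = "{(t,s). t \<in> T \<and> s \<in> T \<and> g t = g s}"
  have "T // ?R = (\<lambda>t. ?R``{t}) ` T" unfolding quotient_def by auto
  also have "\<dots> = (\<lambda>t. {s \<in> T. g s = g t}) ` T" by (rule image_cong) auto
  also have "\<dots> = (\<lambda>v. {s \<in> T. g s = v}) ` (g ` T)" by (simp add: image_image)
  finally have "T // ?R = (\<lambda>v. {s \<in> T. g s = v}) ` (g ` T)" .
  moreover have "inj_on (\<lambda>v. {s \<in> T. g s = v}) (g ` T)"
    by (rule inj_onI) blast
  ultimately show ?thesis by (simp add: card_image)
qed

lemma card_coord:
  assumes nt: "(bot::'b::boolean_algebra) \<noteq> top" and A: "A \<subseteq> cube n"
  shows "card (terms n // coord_rel n (alg_set n (orth_system n A) :: (bool list \<Rightarrow> 'b) set))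
     = 2 ^ (2 ^ n - card A)"
proof -
  have "card (Pow (cube n - A)) = 2 ^ (2 ^ n - card A)"
    using finite_cube A by (simp add: card_Pow card_Diff_subset finite_subset card_cube)
  then show ?thesis unfolding coord_rel_char[OF nt A] card_quotient_g gfun_image[OF nt A] .
qed




definition qalg :: "'v bterm set \<Rightarrow> ('v bterm \<times> 'v bterm) set \<Rightarrow> 'v bterm set balg" where
  "qalg T R = (let rep = (\<lambda>X. SOME t. t \<in> X) in
      \<lparr> bcarrier = T // R,
        bjoin = (\<lambda>X X'. R `` {Join (rep X) (rep X')}),
        bmeet = (\<lambda>X X'. R `` {Meet (rep X) (rep X')}),
        bcompl = (\<lambda>X. R `` {Compl (rep X)}),
        bzero = R `` {Zero},
        bone = R `` {bterm.One} \<rparr>)"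

lemma coord_alg_qalg: "coord_alg n Y = qalg (terms n) (coord_rel n Y)"
  unfolding coord_alg_def qalg_def Let_def ..

lemma rep_in:
  assumes "equiv T R" "X \<in> T // R"
  shows "(SOME t. t \<in> X) \<in> X \<and> (SOME t. t \<in> X) \<in> T \<and> X = R `` {SOME t. t \<in> X}"
proof -
  define s where "s = (SOME t. t \<in> X)"
  obtain x where x: "X = R `` {x}" "x \<in> T" using assms(2) by (rule quotientE)
  have "x \<in> X" using x assms(1) equiv_class_self by fast
  then have r: "s \<in> X" unfolding s_def by (rule someI)
  then have xs: "(x, s) \<in> R" using x by auto
  have eq: "X = R `` {s}" using equiv_class_eq[OF assms(1) xs] x(1) by simp
  have "s \<in> T" using r x(1) equiv_type[OF assms(1)] by blast
  then show ?thesis using r eq unfolding s_def[symmetric] by blast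
qed

lemma rep_class:
  assumes "equiv T R" "t \<in> T"
  shows "(t, SOME s. s \<in> R `` {t}) \<in> R"
proof -
  have "t \<in> R `` {t}" using assms equiv_class_self by fast
  then have "(SOME s. s \<in> R `` {t}) \<in> R `` {t}" by (rule someI)
  then show ?thesis by auto
qed

lemma iso_generic:
  fixes R1 R2 :: "('v bterm \<times> 'v bterm) set"
  assumes e1: "equiv T R1" and e2: "equiv T R2"
    and cJ: "\<And>a a' b b'. (a,a') \<in> R2 \<Longrightarrow> (b,b') \<in> R2 \<Longrightarrow> (Join a b, Join a' b') \<in> R2"
    and cM: "\<And>a a' b b'. (a,a') \<in> R2 \<Longrightarrow> (b,b') \<in> R2 \<Longrightarrow> (Meet a b, Meet a' b') \<in> R2"
    and cC: "\<And>a a'. (a,a') \<in> R2 \<Longrightarrow> (Compl a, Compl a') \<in> R2"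
    and tJ: "\<And>a b. a \<in> T \<Longrightarrow> b \<in> T \<Longrightarrow> Join a b \<in> T"
    and tM: "\<And>a b. a \<in> T \<Longrightarrow> b \<in> T \<Longrightarrow> Meet a b \<in> T"
    and tC: "\<And>a. a \<in> T \<Longrightarrow> Compl a \<in> T"
    and tZ: "Zero \<in> T" and tO: "bterm.One \<in> T"
    and fT: "\<And>t. t \<in> T \<Longrightarrow> f t \<in> T"
    and fJ: "\<And>a b. f (Join a b) = Join (f a) (f b)"
    and fM: "\<And>a b. f (Meet a b) = Meet (f a) (f b)"
    and fC: "\<And>a. f (Compl a) = Compl (f a)"
    and fZ: "f Zero = Zero" and fO: "f bterm.One = bterm.One"
    and fR: "\<And>t s. t \<in> T \<Longrightarrow> s \<in> T \<Longrightarrow> (t,s) \<in> R1 \<longleftrightarrow> (f t, f s) \<in> R2"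
    and fS: "\<And>s. s \<in> T \<Longrightarrow> \<exists>t\<in>T. (f t, s) \<in> R2"
  shows "balg_iso (qalg T R1) (qalg T R2)"
proof -
  define rep :: "'v bterm set \<Rightarrow> 'v bterm" where "rep = (\<lambda>X. SOME t. t \<in> X)"
  define h where "h = (\<lambda>X. R2 `` {f (rep X)})"
  have r1: "rep X \<in> X \<and> rep X \<in> T \<and> X = R1 `` {rep X}" if "X \<in> T // R1" for X
    using rep_in[OF e1 that] unfolding rep_def by blast
  have r2: "rep X \<in> X \<and> rep X \<in> T \<and> X = R2 `` {rep X}" if "X \<in> T // R2" for X
    using rep_in[OF e2 that] unfolding rep_def by blast
  have rc1: "(t, rep (R1 `` {t})) \<in> R1" if "t \<in> T" for t
    using rep_class[OF e1 that] unfolding rep_def .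
  have rc2: "(t, rep (R2 `` {t})) \<in> R2" if "t \<in> T" for t
    using rep_class[OF e2 that] unfolding rep_def .
  have R1T: "(a, b) \<in> R1 \<Longrightarrow> a \<in> T \<and> b \<in> T" for a b using equiv_type[OF e1] by auto
  have R2T: "(a, b) \<in> R2 \<Longrightarrow> a \<in> T \<and> b \<in> T" for a b using equiv_type[OF e2] by auto
  have cls2: "R2 `` {a} = R2 `` {b}" if "(a, b) \<in> R2" for a b using equiv_class_eq[OF e2 that] .
  have sym2: "(b, a) \<in> R2" if "(a, b) \<in> R2" for a b using e2 that unfolding equiv_def sym_def by blast
  have trans2: "(a, c) \<in> R2" if "(a, b) \<in> R2" "(b, c) \<in> R2" for a b c
    using e2 that unfolding equiv_def trans_def by blast
  have hcls: "h (R1 `` {t}) = R2 `` {f t}" if "t \<in> T" for t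
  proof -
    have "(t, rep (R1 `` {t})) \<in> R1" using rc1 that .
    then have "(f t, f (rep (R1 `` {t}))) \<in> R2" using fR R1T by blast
    then show ?thesis unfolding h_def using cls2 by metis
  qed
  have bij: "bij_betw h (T // R1) (T // R2)"
  proof (rule bij_betw_imageI)
    show "inj_on h (T // R1)"
    proof (rule inj_onI)
      fix X Y assume X: "X \<in> T // R1" and Y: "Y \<in> T // R1" and hXY: "h X = h Y"
      have "(f (rep X), f (rep Y)) \<in> R2"
        using hXY unfolding h_def using eq_equiv_class_iff[OF e2] r1 X Y fT by blast
      then have "(rep X, rep Y) \<in> R1" using fR r1 X Y by blast
      then show "X = Y" using r1 X Y equiv_class_eq[OF e1] by metis
    qed
  next
    show "h ` (T // R1) = T // R2"
    proof
      show "h ` (T // R1) \<subseteq> T // R2" 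
      proof (rule image_subsetI)
        fix X assume "X \<in> T // R1"
        then show "h X \<in> T // R2" unfolding h_def using r1 fT quotientI by metis
      qed
    next
      show "T // R2 \<subseteq> h ` (T // R1)"
      proof
        fix Z assume Z: "Z \<in> T // R2"
        then obtain s where s: "Z = R2 `` {s}" "s \<in> T" by (rule quotientE)
        obtain t where t: "t \<in> T" "(f t, s) \<in> R2" using fS s(2) by blast
        have "h (R1 `` {t}) = Z" using hcls[OF t(1)] cls2[OF t(2)] s by simp
        from this[symmetric] quotientI[OF t(1)] show "Z \<in> h ` (T // R1)" by (rule image_eqI)
      qed
    qed
  qed
  have repT1: "rep X \<in> T" if "X \<in> T // R1" for X using r1 that by blast
  have frep: "(f (rep X), rep (h X)) \<in> R2" if "X \<in> T // R1" for X
    unfolding h_def using rc2 fT repT1 that by blast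
  show ?thesis unfolding balg_iso_def
  proof (intro exI conjI ballI)
    show "bij_betw h (bcarrier (qalg T R1)) (bcarrier (qalg T R2))"
      using bij unfolding qalg_def Let_def by simp
  next
    fix X Y assume "X \<in> bcarrier (qalg T R1)" "Y \<in> bcarrier (qalg T R1)"
    then have X: "X \<in> T // R1" and Y: "Y \<in> T // R1" unfolding qalg_def Let_def by auto
    have "h (R1 `` {Join (rep X) (rep Y)}) = R2 `` {Join (rep (h X)) (rep (h Y))}"
      using hcls tJ repT1 X Y fJ cls2 cJ frep by metis
    then show "h (bjoin (qalg T R1) X Y) = bjoin (qalg T R2) (h X) (h Y)"
      unfolding qalg_def Let_def rep_def by simp
    have "h (R1 `` {Meet (rep X) (rep Y)}) = R2 `` {Meet (rep (h X)) (rep (h Y))}"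
      using hcls tM repT1 X Y fM cls2 cM frep by metis
    then show "h (bmeet (qalg T R1) X Y) = bmeet (qalg T R2) (h X) (h Y)"
      unfolding qalg_def Let_def rep_def by simp
  next
    fix X assume "X \<in> bcarrier (qalg T R1)"
    then have X: "X \<in> T // R1" unfolding qalg_def Let_def by auto
    have "h (R1 `` {Compl (rep X)}) = R2 `` {Compl (rep (h X))}"
      using hcls tC repT1 X fC cls2 cC frep by metis
    then show "h (bcompl (qalg T R1) X) = bcompl (qalg T R2) (h X)"
      unfolding qalg_def Let_def rep_def by simp
  next
    show "h (bzero (qalg T R1)) = bzero (qalg T R2)"
      using hcls[OF tZ] fZ unfolding qalg_def Let_def by simp
    show "h (bone (qalg T R1)) = bone (qalg T R2)"
      using hcls[OF tO] fO unfolding qalg_def Let_def by simp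
  qed
qed



lemma equiv_kernel: "equiv T {(t,s). t \<in> T \<and> s \<in> T \<and> g t = g s}"
  by (rule equivI) (auto simp: refl_on_def sym_def trans_def)

lemma exists_perm:
  assumes A1: "A1 \<subseteq> C" and A2: "A2 \<subseteq> C" and fin: "finite C" and c: "card A1 = card A2"
  shows "\<exists>\<sigma>. inj_on \<sigma> C \<and> \<sigma> ` C = C \<and> \<sigma> ` (C - A1) = C - A2"
proof -
  have f1: "finite A1" "finite A2" using A1 A2 fin finite_subset by auto
  obtain f1 where b1: "bij_betw f1 A1 A2" using finite_same_card_bij[OF f1 c] by blast
  have "card (C - A1) = card (C - A2)" using c A1 A2 fin f1 by (simp add: card_Diff_subset card_mono)
  then obtain f2 where b2: "bij_betw f2 (C - A1) (C - A2)"
    using finite_same_card_bij[of "C - A1" "C - A2"] fin by blast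
  define \<sigma> where "\<sigma> = (\<lambda>x. if x \<in> A1 then f1 x else f2 x)"
  have s1: "bij_betw \<sigma> A1 A2" using b1 unfolding \<sigma>_def by (rule bij_betw_cong[THEN iffD1, rotated]) auto
  have s2: "bij_betw \<sigma> (C - A1) (C - A2)" using b2 unfolding \<sigma>_def by (rule bij_betw_cong[THEN iffD1, rotated]) auto
  have "bij_betw \<sigma> (A1 \<union> (C - A1)) (A2 \<union> (C - A2))" by (rule bij_betw_combine[OF s1 s2]) auto
  moreover have "A1 \<union> (C - A1) = C" "A2 \<union> (C - A2) = C" using A1 A2 by auto
  ultimately have "bij_betw \<sigma> C C" by simp
  then show ?thesis using s2 unfolding bij_betw_def by blast
qed

lemma gfun_map:
  assumes inj: "inj_on \<sigma> (cube n)" and im: "\<sigma> ` cube n = cube n"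
    and imF: "\<sigma> ` (cube n - A1) = cube n - A2" and t: "t \<in> terms n"
  shows "gfun TYPE('b::boolean_algebra) n A2 (map_bterm \<sigma> t) = \<sigma> ` gfun TYPE('b) n A1 t"
proof -
  have key: "eval (delta n (\<sigma> \<alpha>) :: bool list \<Rightarrow> 'b) (map_bterm \<sigma> t) = eval (delta n \<alpha>) t"
    if a: "\<alpha> \<in> cube n" for \<alpha>
  proof -
    have "eval (delta n (\<sigma> \<alpha>) :: bool list \<Rightarrow> 'b) (map_bterm \<sigma> t) = eval (delta n (\<sigma> \<alpha>) \<circ> \<sigma>) t"
      by (rule eval_map)
    also have "\<dots> = eval (delta n \<alpha>) t"
    proof (rule eval_cong)
      fix v assume "v \<in> vars t"
      then have v: "v \<in> cube n" using t unfolding terms_def by auto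
      then have "\<sigma> v \<in> cube n" using im by auto
      moreover have "\<sigma> v = \<sigma> \<alpha> \<longleftrightarrow> v = \<alpha>" using inj v a inj_on_eq_iff by metis
      ultimately show "(delta n (\<sigma> \<alpha>) \<circ> \<sigma>) v = (delta n \<alpha> :: bool list \<Rightarrow> 'b) v"
        using v by (simp add: delta_def)
    qed
    finally show ?thesis .
  qed
  show ?thesis
  proof
    show "gfun TYPE('b) n A2 (map_bterm \<sigma> t) \<subseteq> \<sigma> ` gfun TYPE('b) n A1 t"
    proof
      fix \<beta> assume "\<beta> \<in> gfun TYPE('b) n A2 (map_bterm \<sigma> t)"
      then have b: "\<beta> \<in> cube n - A2" "eval (delta n \<beta> :: bool list \<Rightarrow> 'b) (map_bterm \<sigma> t) = top"
        unfolding gfun_def by auto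
      then obtain \<alpha> where "\<alpha> \<in> cube n - A1" "\<beta> = \<sigma> \<alpha>" using imF by blast
      then show "\<beta> \<in> \<sigma> ` gfun TYPE('b) n A1 t" using b key unfolding gfun_def by auto
    qed
  next
    show "\<sigma> ` gfun TYPE('b) n A1 t \<subseteq> gfun TYPE('b) n A2 (map_bterm \<sigma> t)"
      unfolding gfun_def using key imF by auto
  qed
qed

lemma iso_if_card:
  assumes nt: "(bot::'b::boolean_algebra) \<noteq> top" and A1: "A1 \<subseteq> cube n" and A2: "A2 \<subseteq> cube n"
    and c: "card A1 = card A2"
  shows "alg_sets_iso n (alg_set n (orth_system n A1) :: (bool list \<Rightarrow> 'b) set) (alg_set n (orth_system n A2))"
proof -
  obtain \<sigma> where inj: "inj_on \<sigma> (cube n)" and im: "\<sigma> ` cube n = cube n"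
      and imF: "\<sigma> ` (cube n - A1) = cube n - A2"
    using exists_perm[OF A1 A2 finite_cube c] by blast
  let ?Y1 = "alg_set n (orth_system n A1) :: (bool list \<Rightarrow> 'b) set"
  let ?Y2 = "alg_set n (orth_system n A2) :: (bool list \<Rightarrow> 'b) set"
  let ?T = "terms n"
  have R1: "coord_rel n ?Y1 = {(t,s). t \<in> ?T \<and> s \<in> ?T \<and> gfun TYPE('b) n A1 t = gfun TYPE('b) n A1 s}"
    by (rule coord_rel_char[OF nt A1])
  have R2: "coord_rel n ?Y2 = {(t,s). t \<in> ?T \<and> s \<in> ?T \<and> gfun TYPE('b) n A2 t = gfun TYPE('b) n A2 s}"
    by (rule coord_rel_char[OF nt A2])
  have gsub: "gfun TYPE('b) n A t \<subseteq> cube n" for A t unfolding gfun_def by auto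
  have fT: "map_bterm \<sigma> t \<in> ?T" if "t \<in> ?T" for t
    using that im unfolding terms_def by (auto simp: vars_map)
  have "balg_iso (qalg ?T (coord_rel n ?Y1)) (qalg ?T (coord_rel n ?Y2))"
  proof (rule iso_generic[where f = "map_bterm \<sigma>"])
    show "equiv ?T (coord_rel n ?Y1)" unfolding R1 by (rule equiv_kernel)
    show "equiv ?T (coord_rel n ?Y2)" unfolding R2 by (rule equiv_kernel)
  next
    fix a a' b b' assume "(a, a') \<in> coord_rel n ?Y2" "(b, b') \<in> coord_rel n ?Y2"
    then show "(Join a b, Join a' b') \<in> coord_rel n ?Y2" "(Meet a b, Meet a' b') \<in> coord_rel n ?Y2"
      unfolding coord_rel_def terms_def by auto
  next
    fix a a' assume "(a, a') \<in> coord_rel n ?Y2"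
    then show "(Compl a, Compl a') \<in> coord_rel n ?Y2" unfolding coord_rel_def terms_def by auto
  next
    fix t s assume t: "t \<in> ?T" and s: "s \<in> ?T"
    have "gfun TYPE('b) n A2 (map_bterm \<sigma> t) = gfun TYPE('b) n A2 (map_bterm \<sigma> s)
          \<longleftrightarrow> gfun TYPE('b) n A1 t = gfun TYPE('b) n A1 s"
      unfolding gfun_map[OF inj im imF t] gfun_map[OF inj im imF s]
      by (rule inj_on_image_eq_iff[OF inj gsub gsub])
    then show "(t, s) \<in> coord_rel n ?Y1 \<longleftrightarrow> (map_bterm \<sigma> t, map_bterm \<sigma> s) \<in> coord_rel n ?Y2"
      unfolding R1 R2 using t s fT by auto
  next
    fix s assume s: "s \<in> ?T"
    define \<tau> where "\<tau> = inv_into (cube n) \<sigma>"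
    have vs: "vars s \<subseteq> cube n" using s unfolding terms_def by auto
    have tT: "map_bterm \<tau> s \<in> ?T"
      using vs im unfolding terms_def \<tau>_def by (auto simp: vars_map inv_into_into)
    have "map_bterm \<sigma> (map_bterm \<tau> s) = map_bterm id s"
      unfolding bterm.map_comp
      by (rule map_cong_vars) (use vs im in \<open>auto simp: \<tau>_def f_inv_into_f\<close>)
    then have "map_bterm \<sigma> (map_bterm \<tau> s) = s" by (simp add: bterm.map_id)
    then show "\<exists>t\<in>?T. (map_bterm \<sigma> t, s) \<in> coord_rel n ?Y2"
      using tT s unfolding R2 by (intro bexI[of _ "map_bterm \<tau> s"]) auto
  qed (use fT in \<open>auto simp: terms_def\<close>)
  then show ?thesis unfolding alg_sets_iso_def coord_alg_qalg .
qed

lemma card_if_iso: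
  assumes nt: "(bot::'b::boolean_algebra) \<noteq> top" and A1: "A1 \<subseteq> cube n" and A2: "A2 \<subseteq> cube n"
    and iso: "alg_sets_iso n (alg_set n (orth_system n A1) :: (bool list \<Rightarrow> 'b) set) (alg_set n (orth_system n A2))"
  shows "card A1 = card A2"
proof -
  obtain h where "bij_betw h (terms n // coord_rel n (alg_set n (orth_system n A1) :: (bool list \<Rightarrow> 'b) set))
      (terms n // coord_rel n (alg_set n (orth_system n A2) :: (bool list \<Rightarrow> 'b) set))"
    using iso unfolding alg_sets_iso_def balg_iso_def coord_alg_qalg qalg_def Let_def by auto
  then have "card (terms n // coord_rel n (alg_set n (orth_system n A1) :: (bool list \<Rightarrow> 'b) set))
     = card (terms n // coord_rel n (alg_set n (orth_system n A2) :: (bool list \<Rightarrow> 'b) set))"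
    by (rule bij_betw_same_card)
  then have "(2::nat) ^ (2 ^ n - card A1) = 2 ^ (2 ^ n - card A2)"
    unfolding card_coord[OF nt A1] card_coord[OF nt A2] .
  then have "2 ^ n - card A1 = 2 ^ n - card A2" by simp
  moreover have "card A1 \<le> 2 ^ n" "card A2 \<le> 2 ^ n"
    using card_mono[OF finite_cube A1] card_mono[OF finite_cube A2] card_cube by auto
  ultimately show ?thesis by linarith
qed



lemma iso_pairs_eq:
  assumes nt: "(bot::'b::boolean_algebra) \<noteq> top"
  shows "iso_pairs TYPE('b) n = {(A1,A2). A1 \<subseteq> cube n \<and> A2 \<subseteq> cube n \<and> card A1 = card A2}"
  unfolding iso_pairs_def using iso_if_card[OF nt] card_if_iso[OF nt] by blast

lemma count_pairs:
  assumes fin: "finite C"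
  shows "card {(A1,A2). A1 \<subseteq> C \<and> A2 \<subseteq> C \<and> card A1 = card A2} = (2 * card C) choose card C"
proof -
  define S where "S k = {A. A \<subseteq> C \<and> card A = k}" for k
  have eq: "{(A1,A2). A1 \<subseteq> C \<and> A2 \<subseteq> C \<and> card A1 = card A2} = (\<Union>k\<in>{..card C}. S k \<times> S k)"
    unfolding S_def using card_mono[OF fin] by auto
  have finS: "finite (S k)" for k unfolding S_def using fin by (auto intro: finite_subset[of _ "Pow C"])
  have cS: "card (S k) = card C choose k" for k unfolding S_def using n_subsets[OF fin] by simp
  have "card (\<Union>k\<in>{..card C}. S k \<times> S k) = (\<Sum>k\<in>{..card C}. card (S k \<times> S k))"
    by (rule card_UN_disjoint) (use finS in \<open>auto simp: S_def\<close>)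
  also have "\<dots> = (\<Sum>k\<le>card C. (card C choose k)^2)" by (simp add: card_cartesian_product cS power2_eq_square)
  also have "\<dots> = (2 * card C) choose card C" by (rule choose_square_sum)
  finally show ?thesis using eq by simp
qed

lemma count_all:
  assumes fin: "finite C"
  shows "card {(A1,A2). A1 \<subseteq> C \<and> A2 \<subseteq> C} = 4 ^ card C"
proof -
  have "{(A1,A2). A1 \<subseteq> C \<and> A2 \<subseteq> C} = Pow C \<times> Pow C" by auto
  then show ?thesis using fin by (simp add: card_cartesian_product card_Pow power_mult_distrib[symmetric])
qed

lemma part1:
  assumes nt: "(bot::'b::boolean_algebra) \<noteq> top"
  shows "card (iso_pairs TYPE('b) n) = (2 * 2 ^ n) choose (2 ^ n)
         \<and> card {(A1, A2). A1 \<subseteq> cube n \<and> A2 \<subseteq> cube n} = 4 ^ (2 ^ n)"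
  using iso_pairs_eq[OF nt] count_pairs[OF finite_cube] count_all[OF finite_cube] card_cube by metis



lemma frac_aux: "(x+1/2)/(x+1) * (F/(P*G^2)) = ((2*x+2)*(2*x+1)*F)/((4*P)*((x+1)*G)^2)"
      if "x \<ge> 0" "P > 0" "G > 0" for x P F G :: real
proof -
  have ne: "x + 1 \<noteq> 0" "P*G^2 \<noteq> 0" "(4*P)*((x+1)*G)^2 \<noteq> 0" "(x+1)*(P*G^2) \<noteq> 0" using that by auto
  have "(x+1/2)/(x+1) * (F/(P*G^2)) = ((x+1/2)*F)/((x+1)*(P*G^2))" by simp
  also have "\<dots> = ((2*x+2)*(2*x+1)*F)/((4*P)*((x+1)*G)^2)"
    by (subst frac_eq_eq[OF ne(4) ne(3)]) (simp add: power2_eq_square algebra_simps)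
  finally show ?thesis .
qed

lemma gchoose_half:
  "((-1/2 + real m) gchoose m) = fact (2*m) / (4^m * (fact m)^2)"
proof (induction m)
  case 0 then show ?case by simp
next
  case (Suc m)
  have "real (Suc m) * ((-1/2 + real m + 1) gchoose Suc m) = (-1/2 + real m + 1) * ((-1/2 + real m) gchoose m)"
    by (rule Suc_times_gbinomial)
  then have "((-1/2 + real (Suc m)) gchoose Suc m) = (real m + 1/2) / real (Suc m) * ((-1/2 + real m) gchoose m)"
    by (simp add: field_simps add_ac)
  also have "\<dots> = fact (2 * Suc m) / (4 ^ Suc m * (fact (Suc m))^2)"
  proof -
    have f1: "(fact (2 * Suc m) :: real) = (2*real m+2)*(2*real m+1)*fact(2*m)"
      by (simp add: fact_Suc algebra_simps)
    have f2: "(fact (Suc m) :: real) = (real m+1)*fact m" by (simp add: fact_Suc)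
    show ?thesis unfolding Suc.IH f1 f2 power_Suc
      using frac_aux[of "real m" "4^m" "fact m" "fact(2*m)"] by (simp add: add.commute)
  qed
  finally show ?case .
qed

lemma central_binom_real: "real ((2*m) choose m) / 4^m = ((-1/2 + real m) gchoose m)"
proof -
  have "real ((2*m) choose m) = fact (2*m) / (fact m * fact m)"
    using binomial_fact[of m "2*m", where 'a=real] by (simp add: mult_2)
  then show ?thesis unfolding gchoose_half by (simp add: power2_eq_square mult.commute)
qed

lemma central_lim: "(\<lambda>m. real ((2*m) choose m) / 4^m * sqrt (pi * real m)) \<longlonglongrightarrow> 1"
proof -
  have L: "(\<lambda>m. ((-1/2 + real m) gchoose m) * exp (-(-1/2) * of_real (ln (real m)))) \<longlonglongrightarrow> rGamma (-1/2 + 1 :: real)"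
    using Gamma_gbinomial[of "-1/2 :: real"] by simp
  have r: "rGamma (-1/2 + 1 :: real) = 1 / sqrt pi"
  proof -
    have "(-1/2 + 1 :: real) = 1/2" by simp
    then have "rGamma (-1/2 + 1 :: real) = inverse (Gamma (1/2))" by (simp only: rGamma_inverse_Gamma)
    then show ?thesis by (simp only: Gamma_one_half_real inverse_eq_divide)
  qed
  have L2: "(\<lambda>m. ((-1/2 + real m) gchoose m) * exp (-(-1/2) * of_real (ln (real m))) * sqrt pi) \<longlonglongrightarrow> 1 / sqrt pi * sqrt pi"
    by (intro tendsto_intros L[unfolded r])
  have L3: "(\<lambda>m. ((-1/2 + real m) gchoose m) * exp (-(-1/2) * of_real (ln (real m))) * sqrt pi) \<longlonglongrightarrow> 1"
    using L2 by simp
  have ev: "\<forall>\<^sub>F m in sequentially. ((-1/2 + real m) gchoose m) * exp (-(-1/2) * of_real (ln (real m))) * sqrt pi =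
        real ((2*m) choose m) / 4^m * sqrt (pi * real m)"
    using eventually_gt_at_top[of "0::nat"]
  proof eventually_elim
    case (elim m)
    have "exp (-(-1/2) * of_real (ln (real m))) = sqrt (real m)"
      using elim by (simp add: powr_half_sqrt[symmetric] powr_def)
    then show ?case by (simp add: central_binom_real real_sqrt_mult)
  qed
  show ?thesis by (rule Lim_transform_eventually[OF L3 ev])
qed


theorem mainTheorem6:
  assumes nontriv: "(bot :: 'b :: boolean_algebra) \<noteq> top"
  shows "(\<forall>n \<ge> 1. card (iso_pairs TYPE('b) n) = (2 * 2 ^ n) choose (2 ^ n)
                   \<and> card {(A1, A2). A1 \<subseteq> cube n \<and> A2 \<subseteq> cube n} = 4 ^ (2 ^ n))
       \<and> ((\<lambda>n. real (card (iso_pairs TYPE('b) n)) / 4 ^ (2 ^ n))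
            \<sim>[at_top] (\<lambda>n. 1 / sqrt (pi * 2 ^ n)))"
proof (intro conjI allI impI)
  fix n :: nat
  show "card (iso_pairs TYPE('b) n) = (2 * 2 ^ n) choose (2 ^ n)"
    "card {(A1, A2). A1 \<subseteq> cube n \<and> A2 \<subseteq> cube n} = 4 ^ (2 ^ n)"
    using part1[OF nontriv] by blast+
next
  let ?h = "\<lambda>m. real ((2*m) choose m) / 4^m * sqrt (pi * real m)"
  have sm: "strict_mono (\<lambda>n::nat. (2::nat) ^ n)"
    by (rule strict_monoI) simp
  have lim: "(?h \<circ> (\<lambda>n::nat. (2::nat) ^ n)) \<longlonglongrightarrow> 1"
    by (rule LIMSEQ_subseq_LIMSEQ[OF central_lim sm])
  have eq: "real (card (iso_pairs TYPE('b) n)) / 4 ^ (2 ^ n) / (1 / sqrt (pi * 2 ^ n))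
      = (?h \<circ> (\<lambda>n::nat. (2::nat) ^ n)) n" for n
    using part1[OF nontriv, of n] by simp
  show "(\<lambda>n. real (card (iso_pairs TYPE('b) n)) / 4 ^ (2 ^ n)) \<sim>[at_top] (\<lambda>n. 1 / sqrt (pi * 2 ^ n))"
    by (rule asymp_equivI') (use lim in \<open>simp only: eq\<close>)
qed

end
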